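(* Let $P$ be a probability distribution on an input space $\mathcal{X}$ with ground-truth labelling $G^*:\mathcal{X}\to[K]$, and suppose $P$ satisfies $(1/2,b)$-multiplicative-expansion on $\mathcal{X}$ for some $b>1$. Then for every $\rho>0$, $P$ satisfies $\left(\frac{\rho}{b-1},\rho\right)$-constant-expansion.
   Context: Let $\mathcal{T}_{wa}$ be a set of (weak) augmentation maps on $\mathcal{X}$ and $r\ge 0$. For $x\in\mathcal{X}$, $\mathcal{A}(x):=\{x' : \exists T\in\mathcal{T}_{wa}\text{ with }\|x'-T(x)\|\le r\}$; the neighborhood of $x$ is $\mathcal{N}(x):=\{x' : \mathcal{A}(x)\cap\mathcal{A}(x')\neq\emptyset\}$, and for $S\subseteq\mathcal{X}$, $\mathcal{N}(S):=\bigcup_{x\in S}\mathcal{N}(x)$. For $i\in[K]$, $\mathcal{Q}_i:=\{x: G^*(x)=i\}$, and $P_i$ denotes the conditional distribution of $P$ on $\mathcal{Q}_i$, i.e. $P_i(S)=P(S\cap\mathcal{Q}_i)/P(\mathcal{Q}_i)$. The same-class neighborhood is $\mathcal{N}^*(S):=\bigcup_{i\in[K]}\big(\mathcal{N}(S\cap\mathcal{Q}_i)\cap\mathcal{Q}_i\big)$. $P$ satisfies $(a,b)$-multiplicative-expansion if for every $i\in[K]$ and every $S\subseteq\mathcal{Q}_i$ with $P_i(S)\le a$, one has $P_i(\mathcal{N}(S))\ge\min\{bP_i(S),1\}$. $P$ satisfies $(c,\rho)$-constant-expansion if for every $S\subseteq\mathcal{X}$ with $P(S)\ge c$ and $P(S\cap\mathcal{Q}_i)\le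 P(\mathcal{Q}_i)/2$ for all $i\in[K]$, one has $P(\mathcal{N}^*(S)\setminus S)\ge\min\{\rho,P(S)\}$. *)

theory Defs
  imports "HOL-Probability.Probability"
begin

definition aug_set :: "('a::real_normed_vector \<Rightarrow> 'a) set \<Rightarrow> real \<Rightarrow> 'a \<Rightarrow> 'a set" where
  "aug_set Twa r x = {x'. \<exists>T\<in>Twa. norm (x' - T x) \<le> r}"

definition nbhd :: "('a::real_normed_vector \<Rightarrow> 'a) set \<Rightarrow> real \<Rightarrow> 'a \<Rightarrow> 'a set" where
  "nbhd Twa r x = {x'. aug_set Twa r x \<inter> aug_set Twa r x' \<noteq> {}}"

definition nbhd_set :: "('a::real_normed_vector \<Rightarrow> 'a) set \<Rightarrow> real \<Rightarrow> 'a set \<Rightarrow> 'a set" where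
  "nbhd_set Twa r S = (\<Union>x\<in>S. nbhd Twa r x)"

definition cls :: "('a \<Rightarrow> nat) \<Rightarrow> nat \<Rightarrow> 'a set" where
  "cls G i = {x. G x = i}"

definition condP :: "'a measure \<Rightarrow> ('a \<Rightarrow> nat) \<Rightarrow> nat \<Rightarrow> 'a set \<Rightarrow> real" where
  "condP P G i S = measure P (S \<inter> cls G i) / measure P (cls G i)"

definition same_nbhd ::
  "('a::real_normed_vector \<Rightarrow> 'a) set \<Rightarrow> real \<Rightarrow> ('a \<Rightarrow> nat) \<Rightarrow> nat \<Rightarrow> 'a set \<Rightarrow> 'a set" where
  "same_nbhd Twa r G K S = (\<Union>i\<in>{1..K}. nbhd_set Twa r (S \<inter> cls G i) \<inter> cls G i)"

definition mult_expansion ::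
  "'a measure \<Rightarrow> ('a::real_normed_vector \<Rightarrow> 'a) set \<Rightarrow> real \<Rightarrow> ('a \<Rightarrow> nat) \<Rightarrow> nat \<Rightarrow> real \<Rightarrow> real \<Rightarrow> bool" where
  "mult_expansion P Twa r G K a b \<longleftrightarrow>
     (\<forall>i\<in>{1..K}. \<forall>S\<in>sets P. S \<subseteq> cls G i \<longrightarrow> condP P G i S \<le> a \<longrightarrow>
        condP P G i (nbhd_set Twa r S) \<ge> min (b * condP P G i S) 1)"

definition const_expansion ::
  "'a measure \<Rightarrow> ('a::real_normed_vector \<Rightarrow> 'a) set \<Rightarrow> real \<Rightarrow> ('a \<Rightarrow> nat) \<Rightarrow> nat \<Rightarrow> real \<Rightarrow> real \<Rightarrow> bool" where
  "const_expansion P Twa r G K c \<rho> \<longleftrightarrow>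
     (\<forall>S\<in>sets P. measure P S \<ge> c \<longrightarrow>
        (\<forall>i\<in>{1..K}. measure P (S \<inter> cls G i) \<le> measure P (cls G i) / 2) \<longrightarrow>
        measure P (same_nbhd Twa r G K S - S) \<ge> min \<rho> (measure P S))"

end

theory Submission
  imports Defs
begin

theorem lemma1:
  fixes P :: "'a::real_normed_vector measure"
    and Twa :: "('a \<Rightarrow> 'a) set" and r :: real
    and G :: "'a \<Rightarrow> nat" and K :: nat and b :: real
  assumes "prob_space P"
    and "space P = UNIV"
    and "r \<ge> 0"
    and "\<forall>x. G x \<in> {1..K}"
    and "\<forall>i\<in>{1..K}. cls G i \<in> sets P"
    and "\<forall>S\<in>sets P. nbhd_set Twa r S \<in> sets P"
    and "b > 1"
    and "mult_expansion P Twa r G K (1/2) b"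
  shows "\<forall>\<rho>>0. const_expansion P Twa r G K (\<rho> / (b - 1)) \<rho>"
proof (intro allI impI)
  fix \<rho> :: real assume rho: "\<rho> > 0"
  interpret prob_space P by fact
  note Qm = assms(5) and Nm = assms(6)
  define c where "c = min (b - 1) 1"
  have c_pos: "c > 0" using assms(7) by (simp add: c_def)
  show "const_expansion P Twa r G K (\<rho> / (b - 1)) \<rho>"
    unfolding const_expansion_def
  proof (intro ballI impI)
    fix S assume S: "S \<in> sets P" and big: "measure P S \<ge> \<rho> / (b - 1)"
      and half: "\<forall>i\<in>{1..K}. measure P (S \<inter> cls G i) \<le> measure P (cls G i) / 2"
    define Si where "Si i = S \<inter> cls G i" for i
    define D where "D i = nbhd_set Twa r (Si i) \<inter> cls G i - S" for i
    have Sim: "Si i \<in> sets P" if "i \<in> {1..K}" for i using S Qm that by (auto simp: Si_def)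
    have Dm: "D i \<in> sets P" if "i \<in> {1..K}" for i
      using Nm Sim[OF that] Qm that S by (auto simp: D_def)
    have key: "measure P (D i) \<ge> c * measure P (Si i)" if i: "i \<in> {1..K}" for i
    proof (cases "measure P (cls G i) = 0")
      case True
      have "measure P (Si i) \<le> measure P (cls G i)"
        using Qm i by (intro finite_measure_mono) (auto simp: Si_def)
      then have "measure P (Si i) = 0" using True by (simp add: measure_nonneg antisym)
      then show ?thesis by simp
    next
      case False
      let ?q = "measure P (cls G i)" and ?s = "measure P (Si i)"
      let ?N = "nbhd_set Twa r (Si i) \<inter> cls G i"
      have qpos: "?q > 0" using False by (simp add: measure_nonneg order_le_neq_trans)
      have sh: "?s \<le> ?q / 2" using half i by (simp add: Si_def)
      have cond: "condP P G i (Si i) \<le> 1/2"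
        unfolding condP_def using sh qpos
        by (simp add: Si_def Int_assoc divide_le_eq)
      have "condP P G i (nbhd_set Twa r (Si i)) \<ge> min (b * condP P G i (Si i)) 1"
        using assms(8) i Sim[OF i] cond unfolding mult_expansion_def
        by (auto simp: Si_def)
      moreover have "condP P G i (Si i) = ?s / ?q"
        unfolding condP_def by (simp add: Si_def Int_assoc)
      moreover have "condP P G i (nbhd_set Twa r (Si i)) = measure P ?N / ?q"
        unfolding condP_def by simp
      ultimately have "measure P ?N / ?q \<ge> min (b * (?s / ?q)) 1" by simp
      then have Nge: "measure P ?N \<ge> min (b * ?s) ?q"
        using qpos by (auto simp: min_def field_simps split: if_splits)
      have DN: "D i = ?N - Si i" by (auto simp: D_def Si_def)
      have Nm': "?N \<in> sets P" using Nm Sim[OF i] Qm i by auto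
      have "measure P (D i) = measure P ?N - measure P (?N \<inter> Si i)"
        unfolding DN by (rule finite_measure_Diff'[OF Nm' Sim[OF i]])
      moreover have "measure P (?N \<inter> Si i) \<le> ?s"
        using Sim[OF i] by (intro finite_measure_mono) auto
      ultimately have "measure P (D i) \<ge> min (b * ?s) ?q - ?s" using Nge by linarith
      moreover have "min (b * ?s) ?q - ?s \<ge> c * ?s"
      proof -
        have s0: "?s \<ge> 0" by simp
        have a1: "min (b * ?s) ?q - ?s \<ge> min ((b - 1) * ?s) ?s"
          using sh by (auto simp: min_def algebra_simps)
        have a2: "min ((b - 1) * ?s) ?s = c * ?s"
        proof (cases "b \<le> 2")
          case True
          then have "(b - 1) * ?s \<le> 1 * ?s" using s0 by (intro mult_right_mono) auto
          then show ?thesis using True by (simp add: c_def)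
        next
          case False
          then have "(b - 1) * ?s \<ge> 1 * ?s" using s0 by (intro mult_right_mono) auto
          then show ?thesis using False by (simp add: c_def)
        qed
        show ?thesis using a1 a2 by linarith
      qed
      ultimately show ?thesis by linarith
    qed
    have SU: "S = (\<Union>i\<in>{1..K}. Si i)"
      using assms(4) by (auto simp: Si_def cls_def)
    have mS: "measure P S = (\<Sum>i\<in>{1..K}. measure P (Si i))"
      unfolding SU
      by (rule finite_measure_finite_Union) (use Sim in \<open>auto simp: disjoint_family_on_def Si_def cls_def\<close>)
    have DU: "same_nbhd Twa r G K S - S = (\<Union>i\<in>{1..K}. D i)"
      by (auto simp: same_nbhd_def D_def Si_def)
    have mD: "measure P (same_nbhd Twa r G K S - S) = (\<Sum>i\<in>{1..K}. measure P (D i))"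
      unfolding DU
      by (rule finite_measure_finite_Union) (use Dm in \<open>auto simp: disjoint_family_on_def D_def cls_def\<close>)
    have "measure P (same_nbhd Twa r G K S - S) \<ge> c * measure P S"
      unfolding mD mS sum_distrib_left by (intro sum_mono key)
    moreover have "c * measure P S \<ge> min \<rho> (measure P S)"
    proof (cases "b \<ge> 2")
      case True then show ?thesis by (simp add: c_def)
    next
      case False
      then have "c = b - 1" by (simp add: c_def)
      moreover have "(b - 1) * measure P S \<ge> \<rho>"
        using big assms(7) by (simp add: divide_le_eq mult.commute)
      ultimately show ?thesis by simp
    qed
    ultimately show "measure P (same_nbhd Twa r G K S - S) \<ge> min \<rho> (measure P S)" by linarith
  qed
qed

end
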